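(* Let $\mathbb{U}\subseteq\mathbb{R}^{n_u}$ with positive Lebesgue measure, and let $\beta,\gamma\in\mathbb{R}\setminus\{0\}$ with $\beta<\gamma$. (i) Let $g:\mathbb{U}\to\mathbb{R}$ be bounded below with $\int_{\mathbb{U}}\exp(\beta g(u))\,du<\infty$ and $\int_{\mathbb{U}}\exp(-(\gamma-\beta)g(u))\,du<\infty$. Then $$\frac{1}{\beta}\log\int_{\mathbb{U}}\exp(\beta g(u))\,du=\inf_{\rho\in L^{1-\frac{\gamma}{\gamma-\beta}}(\mathbb{U})}\Big\{\frac{1}{\gamma}\log\int_{\mathbb{U}}\exp(\gamma g(u))\rho(u)\,du-\frac{1}{\gamma-\beta}\mathcal{H}_{1-\frac{\gamma}{\gamma-\beta}}(\rho)\Big\},$$ and the unique minimizer of the right-hand side is $\rho(u)=\exp(-(\gamma-\beta)g(u))/\int_{\mathbb{U}}\exp(-(\gamma-\beta)g(u'))\,du'$, $u\in\mathbb{U}$. (ii) Let $h:\mathbb{U}\to\mathbb{R}$ be bounded above with $\int_{\mathbb{U}}\exp(\gamma h(u))\,du<\infty$ and $\int_{\mathbb{U}}\exp((\gamma-\beta)h(u))\,du<\infty$. Then $$\frac{1}{\gamma}\log\int_{\mathbb{U}}\exp(\gamma h(u))\,du=\sup_{\rho\in L^{\frac{\gamma}{\gamma-\beta}}(\mathbb{U})}\Big\{\frac{1}{\beta}\log\int_{\mathbb{U}}\exp(\beta h(u))\rho(u)\,du+\frac{1}{\gamma-\beta}\mathcal{H}_{\frac{\gamma}{\gamma-\beta}}(\rho)\Big\},$$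 and the unique maximizer of the right-hand side is $\rho(u)=\exp((\gamma-\beta)h(u))/\int_{\mathbb{U}}\exp((\gamma-\beta)h(u'))\,du'$, $u\in\mathbb{U}$.
   Context: For a probability density $p$ on $\mathbb{U}$ and $\alpha\in\mathbb{R}\setminus\{0,1\}$ (including $\alpha<0$), the R\'enyi entropy is $\mathcal{H}_\alpha(p)=\frac{1}{\alpha(1-\alpha)}\log\int_{\{u:p(u)>0\}}p(u)^\alpha\,du$. For $\alpha\in\mathbb{R}\setminus\{0,1\}$, $L^{\alpha}(\mathbb{U})=\{\rho$ probability density on $\mathbb{U}:\int_{\mathbb{U}}\rho(u)^{\alpha}du<\infty\}$. *)

theory Defs
  imports "HOL-Analysis.Analysis"
begin

definition elog :: "ennreal \<Rightarrow> ereal" where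
  "elog x = (if x = \<infinity> then \<infinity> else if x = 0 then -\<infinity> else ereal (ln (enn2real x)))"

definition prob_density_on :: "'a::euclidean_space set \<Rightarrow> ('a \<Rightarrow> real) \<Rightarrow> bool" where
  "prob_density_on U \<rho> \<longleftrightarrow>
     \<rho> \<in> borel_measurable (lebesgue_on U) \<and> (\<forall>u\<in>U. 0 \<le> \<rho> u) \<and>
     (\<integral>\<^sup>+ u. ennreal (\<rho> u) \<partial>lebesgue_on U) = 1"

definition epow :: "real \<Rightarrow> real \<Rightarrow> ennreal" where
  "epow a x = (if x = 0 then (if a < 0 then \<infinity> else 0) else ennreal (x powr a))"

definition L_alpha :: "'a::euclidean_space set \<Rightarrow> real \<Rightarrow> ('a \<Rightarrow> real) set" where
  "L_alpha U a = {\<rho>. prob_density_on U \<rho> \<and> (\<integral>\<^sup>+ u. epow a (\<rho> u) \<partial>lebesgue_on U) < \<infinity>}"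

definition renyi_entropy :: "'a::euclidean_space set \<Rightarrow> real \<Rightarrow> ('a \<Rightarrow> real) \<Rightarrow> real" where
  "renyi_entropy U a p =
     1 / (a * (1 - a)) *
     ln (enn2real (\<integral>\<^sup>+ u. indicator {v. p v > 0} u * ennreal (p u powr a) \<partial>lebesgue_on U))"

end

theory Submission
  imports Defs
begin

lemma young_strict_aux:
  fixes t s :: real
  assumes t: "0 < t" "t < 1" and s: "0 \<le> s" "s \<noteq> 1"
  shows "s powr t < t * s + (1 - t)"
proof -
  define f where "f = (\<lambda>x::real. t * x + (1 - t) - x powr t)"
  have der: "DERIV f x :> (t - t * x powr (t - 1))" if "x > 0" for x
    unfolding f_def using that
    by (auto intro!: derivative_eq_intros)
  have cont: "continuous_on {a..b} f" if "0 < a" for a b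
    unfolding f_def using that
    by (intro continuous_intros) auto
  have f1: "f 1 = 0" by (simp add: f_def)
  consider "s = 0" | "0 < s" "s < 1" | "1 < s" using s by linarith
  then show ?thesis
  proof cases
    case 1 then show ?thesis using t by simp
  next
    case 2
    have "f s > f 1"
    proof (rule DERIV_neg_imp_decreasing_open[OF \<open>s < 1\<close> _ cont[OF \<open>0 < s\<close>]])
      fix x assume x: "s < x" "x < 1"
      have "x powr (t - 1) > 1"
        using powr_less_mono2_neg[of "t - 1" x 1] x 2 t by auto
      then have "t - t * x powr (t - 1) < 0" using t by (simp add: mult_less_cancel_left)
      then show "\<exists>y. DERIV f x :> y \<and> y < 0" using der[of x] x 2 by auto
    qed
    then show ?thesis using f1 by (simp add: f_def)
  next
    case 3
    have "f 1 < f s"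
    proof (rule DERIV_pos_imp_increasing_open[OF \<open>1 < s\<close> _ cont])
      fix x assume x: "1 < x" "x < s"
      have "x powr (t - 1) < 1"
        using x t by (intro powr_less_one) auto
      then have "t - t * x powr (t - 1) > 0" using t by (simp add: mult_less_cancel_left)
      then show "\<exists>y. DERIV f x :> y \<and> y > 0" using der[of x] x by auto
    qed simp
    then show ?thesis using f1 by (simp add: f_def)
  qed
qed

lemma young2:
  fixes t u v :: real
  assumes t: "0 < t" "t < 1" and uv: "0 \<le> u" "0 \<le> v"
  shows "u powr t * v powr (1 - t) \<le> t * u + (1 - t) * v"
    and "u powr t * v powr (1 - t) = t * u + (1 - t) * v \<Longrightarrow> u = v"
proof -
  have "u powr t * v powr (1 - t) \<le> t * u + (1 - t) * v \<and>
        (u powr t * v powr (1 - t) = t * u + (1 - t) * v \<longrightarrow> u = v)"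
  proof (cases "v = 0")
    case True
    then show ?thesis using t uv by (auto simp: mult_le_0_iff)
  next
    case False
    then have v: "v > 0" using uv by auto
    define s where "s = u / v"
    have s0: "s \<ge> 0" using uv v by (simp add: s_def)
    have u: "u = s * v" using v by (simp add: s_def)
    have "u powr t * v powr (1 - t) = s powr t * (v powr t * v powr (1 - t))"
      using s0 v by (simp add: u powr_mult)
    also have "v powr t * v powr (1 - t) = v"
      using v by (simp flip: powr_add)
    finally have L: "u powr t * v powr (1 - t) = v * s powr t" by simp
    have R: "t * u + (1 - t) * v = v * (t * s + (1 - t))" by (simp add: u algebra_simps)
    show ?thesis
    proof (cases "s = 1")
      case True then show ?thesis using L R u by simp
    next
      case False
      have "s powr t < t * s + (1 - t)" using young_strict_aux[OF t s0 False] .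
      then have "v * s powr t < v * (t * s + (1 - t))" using v by simp
      then have "u powr t * v powr (1 - t) < t * u + (1 - t) * v" using L R by simp
      then show ?thesis by (metis less_le)
    qed
  qed
  then show "u powr t * v powr (1 - t) \<le> t * u + (1 - t) * v"
    and "u powr t * v powr (1 - t) = t * u + (1 - t) * v \<Longrightarrow> u = v" by auto
qed

lemma holder_eq:
  fixes M :: "'m measure" and x y :: "'m \<Rightarrow> real" and t :: real
  assumes t: "0 < t" "t < 1"
    and ix: "integrable M x" and iy: "integrable M y"
    and nx: "\<And>w. w \<in> space M \<Longrightarrow> 0 \<le> x w"
    and ny: "\<And>w. w \<in> space M \<Longrightarrow> 0 \<le> y w"
    and X: "0 < integral\<^sup>L M x" and Y: "0 < integral\<^sup>L M y"
  shows "integrable M (\<lambda>w. x w powr t * y w powr (1 - t))"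
    and "(\<integral>w. x w powr t * y w powr (1 - t) \<partial>M) \<le> (integral\<^sup>L M x) powr t * (integral\<^sup>L M y) powr (1 - t)"
    and "(\<integral>w. x w powr t * y w powr (1 - t) \<partial>M) = (integral\<^sup>L M x) powr t * (integral\<^sup>L M y) powr (1 - t)
         \<Longrightarrow> AE w in M. x w / integral\<^sup>L M x = y w / integral\<^sup>L M y"
proof -
  define X where "X = integral\<^sup>L M x"
  define Y where "Y = integral\<^sup>L M y"
  have Xp: "X > 0" and Yp: "Y > 0" using X Y by (auto simp: X_def Y_def)
  define k where "k = (\<lambda>w. x w powr t * y w powr (1 - t))"
  define C where "C = X powr t * Y powr (1 - t)"
  have Cp: "C > 0" using Xp Yp by (simp add: C_def)
  have mx[measurable]: "x \<in> borel_measurable M" using ix by auto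
  have my[measurable]: "y \<in> borel_measurable M" using iy by auto
  have ik: "integrable M k"
  proof (rule Bochner_Integration.integrable_bound[of M "\<lambda>w. t * x w + (1 - t) * y w"])
    show "integrable M (\<lambda>w. t * x w + (1 - t) * y w)" using ix iy by auto
    show "k \<in> borel_measurable M" unfolding k_def by measurable
    show "AE w in M. norm (k w) \<le> norm (t * x w + (1 - t) * y w)"
      using young2(1)[OF t nx ny] t nx ny
      by (intro AE_I2) (auto simp: k_def)
  qed
  then show "integrable M (\<lambda>w. x w powr t * y w powr (1 - t))" by (simp add: k_def)
  define p where "p = (\<lambda>w. (x w / X) powr t * (y w / Y) powr (1 - t))"
  define q where "q = (\<lambda>w. t * (x w / X) + (1 - t) * (y w / Y))"
  have pk: "p w = k w / C" if "w \<in> space M" for w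
    using nx[OF that] ny[OF that] Xp Yp by (simp add: p_def k_def C_def powr_divide)
  have pq: "p w \<le> q w" if "w \<in> space M" for w
    unfolding p_def q_def using nx[OF that] ny[OF that] Xp Yp by (intro young2(1)[OF t]) auto
  have ip: "integrable M p"
  proof -
    have "integrable M (\<lambda>w. k w / C)" using ik by auto
    then show ?thesis by (subst Bochner_Integration.integrable_cong[OF refl pk]) auto
  qed
  have iq: "integrable M q" unfolding q_def using ix iy by auto
  have Iq: "integral\<^sup>L M q = 1"
    unfolding q_def using ix iy Xp Yp by (simp add: X_def Y_def)
  have Ip: "integral\<^sup>L M p = integral\<^sup>L M k / C"
    by (subst Bochner_Integration.integral_cong[OF refl pk]) auto
  have "integral\<^sup>L M p \<le> integral\<^sup>L M q"
    by (rule integral_mono[OF ip iq pq])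
  then have "integral\<^sup>L M k / C \<le> 1" using Ip Iq by simp
  then have le: "integral\<^sup>L M k \<le> C" using Cp by (simp add: divide_le_eq)
  then show "(\<integral>w. x w powr t * y w powr (1 - t) \<partial>M) \<le> (integral\<^sup>L M x) powr t * (integral\<^sup>L M y) powr (1 - t)"
    by (simp add: k_def C_def X_def Y_def)
  assume eq: "(\<integral>w. x w powr t * y w powr (1 - t) \<partial>M) = (integral\<^sup>L M x) powr t * (integral\<^sup>L M y) powr (1 - t)"
  then have "integral\<^sup>L M k = C" by (simp add: k_def C_def X_def Y_def)
  then have "integral\<^sup>L M p = 1" using Ip Cp by simp
  then have "integral\<^sup>L M (\<lambda>w. q w - p w) = 0" using Iq iq ip by simp
  moreover have "integrable M (\<lambda>w. q w - p w)" using iq ip by auto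
  moreover have "AE w in M. 0 \<le> q w - p w" using pq by (intro AE_I2) auto
  ultimately have "AE w in M. q w - p w = 0" using integral_nonneg_eq_0_iff_AE by blast
  then show "AE w in M. x w / integral\<^sup>L M x = y w / integral\<^sup>L M y"
  proof (rule AE_mp, intro AE_I2 impI)
    fix w assume w: "w \<in> space M" and "q w - p w = 0"
    then have "p w = q w" by simp
    moreover have "0 \<le> x w / X" "0 \<le> y w / Y" using nx[OF w] ny[OF w] Xp Yp by auto
    ultimately have "x w / X = y w / Y"
      using young2(2)[OF t, of "x w / X" "y w / Y"] unfolding p_def q_def by blast
    then show "x w / integral\<^sup>L M x = y w / integral\<^sup>L M y" by (simp add: X_def Y_def)
  qed
qed

lemma AE_False_pos:
  assumes "emeasure M (space M) > 0" "AE x in M. False"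
  shows False
proof -
  have "ae_filter M = bot" using assms(2) trivial_limit_def by blast
  then show False using assms(1) ae_filter_eq_bot_iff[of M] by simp
qed

lemma pos_integral:
  fixes f :: "'m \<Rightarrow> real"
  assumes M: "emeasure M (space M) > 0" and i: "integrable M f"
    and p: "AE u in M. f u > 0"
  shows "integral\<^sup>L M f > 0"
proof -
  have nn: "AE u in M. 0 \<le> f u" using p by (rule AE_mp) (intro AE_I2, auto)
  have "integral\<^sup>L M f \<ge> 0" using nn by (rule integral_nonneg_AE)
  moreover have "integral\<^sup>L M f \<noteq> 0"
  proof
    assume "integral\<^sup>L M f = 0"
    then have "AE u in M. f u = 0" using integral_nonneg_eq_0_iff_AE[OF i nn] by simp
    with p have "AE u in M. False" by eventually_elim auto
    then show False using AE_False_pos[OF M] by blast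
  qed
  ultimately show ?thesis by simp
qed

lemma rho_facts:
  fixes U :: "'a::euclidean_space set" and \<rho> :: "'a \<Rightarrow> real"
  assumes r: "\<rho> \<in> L_alpha U a" and a: "a \<noteq> 0"
  shows "\<rho> \<in> borel_measurable (lebesgue_on U)"
    and "\<And>u. u \<in> U \<Longrightarrow> 0 \<le> \<rho> u"
    and "integrable (lebesgue_on U) \<rho>"
    and "integral\<^sup>L (lebesgue_on U) \<rho> = 1"
    and "integrable (lebesgue_on U) (\<lambda>u. \<rho> u powr a)"
    and "integral\<^sup>L (lebesgue_on U) (\<lambda>u. \<rho> u powr a) > 0"
    and "renyi_entropy U a \<rho> = 1 / (a * (1 - a)) * ln (integral\<^sup>L (lebesgue_on U) (\<lambda>u. \<rho> u powr a))"
    and "a < 0 \<Longrightarrow> AE u in lebesgue_on U. \<rho> u > 0"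
proof -
  let ?M = "lebesgue_on U"
  have m[measurable]: "\<rho> \<in> borel_measurable ?M" and nn: "\<And>u. u \<in> U \<Longrightarrow> 0 \<le> \<rho> u"
    and one: "(\<integral>\<^sup>+ u. ennreal (\<rho> u) \<partial>?M) = 1"
    and fin: "(\<integral>\<^sup>+ u. epow a (\<rho> u) \<partial>?M) < \<infinity>"
    using r by (auto simp: L_alpha_def prob_density_on_def)
  show "\<rho> \<in> borel_measurable ?M" "\<And>u. u \<in> U \<Longrightarrow> 0 \<le> \<rho> u" by fact+
  have ir: "integrable ?M \<rho>"
    by (rule integrableI_nn_integral_finite[where x=1]) (use one nn in auto)
  show "integrable ?M \<rho>" by fact
  have AEnn: "AE u in ?M. 0 \<le> \<rho> u" by (intro AE_I2) (use nn in auto)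
  have "ennreal (integral\<^sup>L ?M \<rho>) = 1"
    using nn_integral_eq_integral[OF ir AEnn] one by simp
  then have int1: "integral\<^sup>L ?M \<rho> = 1"
    using integral_nonneg_AE[OF AEnn] by simp
  show "integral\<^sup>L ?M \<rho> = 1" by fact
  have me[measurable]: "(\<lambda>u. epow a (\<rho> u)) \<in> borel_measurable ?M"
    unfolding epow_def by measurable
  have AEpos: "AE u in ?M. \<rho> u > 0" if "a < 0"
  proof -
    have "AE u in ?M. epow a (\<rho> u) \<noteq> \<infinity>"
      using fin by (intro nn_integral_PInf_AE) auto
    then show ?thesis
      by (rule AE_mp) (intro AE_I2, use nn that in \<open>auto simp: epow_def less_le\<close>)
  qed
  show "a < 0 \<Longrightarrow> AE u in lebesgue_on U. \<rho> u > 0" by (rule AEpos)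
  have AEeq: "AE u in ?M. epow a (\<rho> u) = ennreal (\<rho> u powr a)"
  proof (cases "a < 0")
    case True
    show ?thesis using AEpos[OF True] by (rule AE_mp) (intro AE_I2, auto simp: epow_def)
  next
    case False
    then show ?thesis using a by (intro AE_I2) (auto simp: epow_def)
  qed
  have eqn: "(\<integral>\<^sup>+ u. ennreal (\<rho> u powr a) \<partial>?M) = (\<integral>\<^sup>+ u. epow a (\<rho> u) \<partial>?M)"
    using AEeq by (intro nn_integral_cong_AE) (auto elim: AE_mp)
  have ip: "integrable ?M (\<lambda>u. \<rho> u powr a)"
  proof (rule integrableI_bounded)
    show "(\<lambda>u. \<rho> u powr a) \<in> borel_measurable ?M" by measurable
    have "(\<integral>\<^sup>+ u. ennreal (norm (\<rho> u powr a)) \<partial>?M) = (\<integral>\<^sup>+ u. ennreal (\<rho> u powr a) \<partial>?M)"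
      by (intro nn_integral_cong) auto
    then show "(\<integral>\<^sup>+ u. ennreal (norm (\<rho> u powr a)) \<partial>?M) < \<infinity>" using eqn fin by simp
  qed
  show "integrable ?M (\<lambda>u. \<rho> u powr a)" by fact
  have Bpos: "integral\<^sup>L ?M (\<lambda>u. \<rho> u powr a) > 0"
  proof -
    have B0: "integral\<^sup>L ?M (\<lambda>u. \<rho> u powr a) \<ge> 0" by (intro integral_nonneg_AE AE_I2) auto
    have "integral\<^sup>L ?M (\<lambda>u. \<rho> u powr a) \<noteq> 0"
    proof
      assume "integral\<^sup>L ?M (\<lambda>u. \<rho> u powr a) = 0"
      then have "AE u in ?M. \<rho> u powr a = 0"
        using integral_nonneg_eq_0_iff_AE[OF ip] by auto
      then have "AE u in ?M. \<rho> u = 0" by (rule AE_mp) (intro AE_I2, auto)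
      then have "integral\<^sup>L ?M \<rho> = integral\<^sup>L ?M (\<lambda>u. 0)"
        by (intro integral_cong_AE) auto
      then show False using int1 by simp
    qed
    then show ?thesis using B0 by linarith
  qed
  show "integral\<^sup>L ?M (\<lambda>u. \<rho> u powr a) > 0" by fact
  have "(\<integral>\<^sup>+ u. indicator {v. \<rho> v > 0} u * ennreal (\<rho> u powr a) \<partial>?M)
      = (\<integral>\<^sup>+ u. ennreal (\<rho> u powr a) \<partial>?M)"
  proof (intro nn_integral_cong)
    fix u assume "u \<in> space ?M"
    then have "0 \<le> \<rho> u" using nn by simp
    then show "indicator {v. \<rho> v > 0} u * ennreal (\<rho> u powr a) = ennreal (\<rho> u powr a)"
      by (cases "\<rho> u = 0") (auto simp: indicator_def)
  qed
  also have "\<dots> = ennreal (integral\<^sup>L ?M (\<lambda>u. \<rho> u powr a))"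
    by (rule nn_integral_eq_integral[OF ip]) auto
  finally show "renyi_entropy U a \<rho> = 1 / (a * (1 - a)) * ln (integral\<^sup>L ?M (\<lambda>u. \<rho> u powr a))"
    unfolding renyi_entropy_def using Bpos by simp
qed

lemma holder_ln:
  fixes M :: "'m measure" and x y f :: "'m \<Rightarrow> real" and t :: real
  assumes t: "0 < t" "t < 1"
    and ix: "integrable M x" and iy: "integrable M y"
    and nx': "\<forall>w\<in>space M. 0 \<le> x w"
    and ny': "\<forall>w\<in>space M. 0 \<le> y w"
    and X: "0 < integral\<^sup>L M x" and Y: "0 < integral\<^sup>L M y"
    and iff: "integrable M f" and eq: "AE w in M. x w powr t * y w powr (1 - t) = f w"
    and fpos: "0 < integral\<^sup>L M f"
  shows "ln (integral\<^sup>L M f) \<le> t * ln (integral\<^sup>L M x) + (1 - t) * ln (integral\<^sup>L M y)"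
    and "ln (integral\<^sup>L M f) = t * ln (integral\<^sup>L M x) + (1 - t) * ln (integral\<^sup>L M y)
         \<Longrightarrow> AE w in M. x w / integral\<^sup>L M x = y w / integral\<^sup>L M y"
proof -
  have nx: "\<And>w. w \<in> space M \<Longrightarrow> 0 \<le> x w" using nx' by blast
  have ny: "\<And>w. w \<in> space M \<Longrightarrow> 0 \<le> y w" using ny' by blast
  note H = holder_eq[OF t ix iy nx ny X Y]
  have mx[measurable]: "x \<in> borel_measurable M" using ix by auto
  have my[measurable]: "y \<in> borel_measurable M" using iy by auto
  have mf[measurable]: "f \<in> borel_measurable M" using iff by auto
  have I: "integral\<^sup>L M f = (\<integral>w. x w powr t * y w powr (1 - t) \<partial>M)"
    using eq by (intro integral_cong_AE) (auto elim: AE_mp)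
  define C where "C = (integral\<^sup>L M x) powr t * (integral\<^sup>L M y) powr (1 - t)"
  have Cp: "C > 0" using X Y by (simp add: C_def)
  have lnC: "ln C = t * ln (integral\<^sup>L M x) + (1 - t) * ln (integral\<^sup>L M y)"
    using X Y by (simp add: C_def ln_mult ln_powr)
  have le: "integral\<^sup>L M f \<le> C" using H(2) I by (simp add: C_def)
  show "ln (integral\<^sup>L M f) \<le> t * ln (integral\<^sup>L M x) + (1 - t) * ln (integral\<^sup>L M y)"
    using ln_le_cancel_iff[OF fpos Cp] le lnC by simp
  assume "ln (integral\<^sup>L M f) = t * ln (integral\<^sup>L M x) + (1 - t) * ln (integral\<^sup>L M y)"
  then have "ln (integral\<^sup>L M f) = ln C" using lnC by simp
  then have "integral\<^sup>L M f = C" using fpos Cp by simp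
  then show "AE w in M. x w / integral\<^sup>L M x = y w / integral\<^sup>L M y"
    using H(3) I by (simp add: C_def)
qed

lemma pw1:
  fixes r p t a s :: real
  assumes "r > 0"
  shows "(exp p * r) powr t * (r powr a) powr s = exp (p * t) * r powr (t + a * s)"
  using assms by (simp add: powr_mult powr_powr powr_add exp_powr_real)

lemma pw2:
  fixes r p q t s :: real
  assumes "r \<ge> 0"
  shows "(exp p) powr t * (exp q * r) powr s = exp (p * t + q * s) * r powr s"
  using assms by (simp add: powr_mult exp_powr_real exp_add)

lemma pw3:
  fixes r p t a s :: real
  assumes "r \<ge> 0"
  shows "(exp p) powr t * (r powr a) powr s = exp (p * t) * r powr (a * s)"
  using assms by (simp add: powr_powr exp_powr_real)

lemma finish_lemma:
  fixes L R c gap :: real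
  assumes "c > 0" "R - L = c * gap" "gap \<ge> 0" "gap = 0 \<Longrightarrow> P"
  shows "L \<le> R \<and> (L = R \<longrightarrow> P)"
proof -
  have "c * gap \<ge> 0" using assms by simp
  then have "L \<le> R" using assms(2) by linarith
  moreover have "L = R \<Longrightarrow> gap = 0" using assms by simp
  ultimately show ?thesis using assms(4) by blast
qed

lemma expK:
  fixes r k d x :: real
  assumes "r > 0" "ln r = k - d * x"
  shows "r = exp k * exp (- d * x)"
proof -
  have "r = exp (ln r)" using assms(1) by simp
  also have "\<dots> = exp (k + (- d * x))" using assms(2) by (simp only: diff_conv_add_uminus mult_minus_left)
  also have "\<dots> = exp k * exp (- d * x)" by (rule exp_add)
  finally show ?thesis .
qed

lemma part1:
  fixes U :: "'a::euclidean_space set" and \<beta> \<gamma> :: real and g :: "'a \<Rightarrow> real"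
  assumes U_meas: "U \<in> sets lebesgue" and U_pos: "emeasure lebesgue U > 0"
    and \<beta>_nz: "\<beta> \<noteq> 0" and \<gamma>_nz: "\<gamma> \<noteq> 0" and \<beta>\<gamma>: "\<beta> < \<gamma>"
    and gb: "\<exists>c. \<forall>u\<in>U. c \<le> g u"
    and i1: "integrable (lebesgue_on U) (\<lambda>u. exp (\<beta> * g u))"
    and i2: "integrable (lebesgue_on U) (\<lambda>u. exp (- (\<gamma> - \<beta>) * g u))"
    and a_def: "a = 1 - \<gamma> / (\<gamma> - \<beta>)"
    and F_def: "F = (\<lambda>\<rho>. ereal (1 / \<gamma>) *
                     elog (\<integral>\<^sup>+ u. ennreal (exp (\<gamma> * g u) * \<rho> u) \<partial>lebesgue_on U)
                   - ereal (1 / (\<gamma> - \<beta>) * renyi_entropy U a \<rho>))"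
    and V_def: "V = 1 / \<beta> * ln (\<integral> u. exp (\<beta> * g u) \<partial>lebesgue_on U)"
    and \<rho>0_def: "\<rho>0 = (\<lambda>u. exp (- (\<gamma> - \<beta>) * g u) /
                    (\<integral> u'. exp (- (\<gamma> - \<beta>) * g u') \<partial>lebesgue_on U))"
  shows "ereal V = (INF \<rho>\<in>L_alpha U a. F \<rho>) \<and>
         \<rho>0 \<in> L_alpha U a \<and> F \<rho>0 = ereal V \<and>
         (\<forall>\<rho>\<in>L_alpha U a. F \<rho> = ereal V \<longrightarrow> (AE u in lebesgue_on U. \<rho> u = \<rho>0 u))"
proof -
  let ?M = "lebesgue_on U"
  define \<delta> where "\<delta> = \<gamma> - \<beta>"
  have \<delta>p: "\<delta> > 0" using \<beta>\<gamma> by (simp add: \<delta>_def)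
  have a\<delta>: "a = - \<beta> / \<delta>" using \<delta>p by (simp add: a_def \<delta>_def field_simps)
  have a0: "a \<noteq> 0" using a\<delta> \<beta>_nz \<delta>p by simp
  have Mpos: "emeasure ?M (space ?M) > 0"
    using U_pos U_meas by (simp add: emeasure_restrict_space)
  obtain c where c: "\<And>u. u \<in> U \<Longrightarrow> c \<le> g u" using gb by blast
  have gm[measurable]: "g \<in> borel_measurable ?M"
  proof -
    have e: "(\<lambda>u. exp (\<beta> * g u)) \<in> borel_measurable ?M" using i1 by auto
    have "(\<lambda>x::real. ln x / \<beta>) \<in> borel_measurable borel" by measurable
    from measurable_compose[OF e this] show ?thesis using \<beta>_nz by simp
  qed
  define Z where "Z = (\<integral> u. exp (\<beta> * g u) \<partial>?M)"
  define W where "W = (\<integral> u. exp (- \<delta> * g u) \<partial>?M)"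
  have i2': "integrable ?M (\<lambda>u. exp (- \<delta> * g u))" using i2 by (simp add: \<delta>_def)
  have Zp: "Z > 0" unfolding Z_def by (rule pos_integral[OF Mpos i1]) auto
  have Wp: "W > 0" unfolding W_def by (rule pos_integral[OF Mpos i2']) auto
  have \<rho>0_eq: "\<rho>0 = (\<lambda>u. exp (- \<delta> * g u) / W)" by (simp add: \<rho>0_def \<delta>_def W_def)
  have V_eq: "V = 1 / \<beta> * ln Z" by (simp add: V_def Z_def)
  have Fren: "1 / (\<gamma> - \<beta>) * (1 / (a * (1 - a)) * l) = - \<delta> / (\<beta> * \<gamma>) * l" for l
    using \<delta>p \<beta>_nz \<gamma>_nz by (simp add: a\<delta> \<delta>_def[symmetric] field_simps) (simp add: \<delta>_def algebra_simps)

  have key: "ereal V \<le> F \<rho> \<and> (F \<rho> = ereal V \<longrightarrow> (AE u in ?M. \<rho> u = \<rho>0 u))"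
    if rL: "\<rho> \<in> L_alpha U a" for \<rho>
  proof -
    note rf = rho_facts[OF rL a0]
    have \<rho>m[measurable]: "\<rho> \<in> borel_measurable ?M" by (rule rf(1))
    have \<rho>nn: "\<And>u. u \<in> U \<Longrightarrow> 0 \<le> \<rho> u" by (rule rf(2))
    define B where "B = (\<integral> u. \<rho> u powr a \<partial>?M)"
    have Bp: "B > 0" using rf(6) by (simp add: B_def)
    have ren: "1 / (\<gamma> - \<beta>) * renyi_entropy U a \<rho> = - \<delta> / (\<beta> * \<gamma>) * ln B"
      using rf(7) Fren by (simp add: B_def)
    have uniq: "AE u in ?M. \<rho> u = \<rho>0 u" if K: "AE u in ?M. \<rho> u = K * exp (- \<delta> * g u)" for K
    proof -
      have "integral\<^sup>L ?M \<rho> = (\<integral> u. K * exp (- \<delta> * g u) \<partial>?M)"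
        using K by (intro integral_cong_AE) auto
      then have "1 = K * W" using rf(4) by (simp add: W_def)
      then have "K = 1 / W" using Wp by (simp add: field_simps)
      then show ?thesis using K unfolding \<rho>0_eq by simp
    qed
    show ?thesis
    proof (cases "integrable ?M (\<lambda>u. exp (\<gamma> * g u) * \<rho> u)")
      case False
      have \<gamma>p: "\<gamma> > 0"
      proof (rule ccontr)
        assume "\<not> \<gamma> > 0"
        then have \<gamma>n: "\<gamma> < 0" using \<gamma>_nz by simp
        have "integrable ?M (\<lambda>u. exp (\<gamma> * g u) * \<rho> u)"
        proof (rule Bochner_Integration.integrable_bound[of ?M "\<lambda>u. exp (\<gamma> * c) * \<rho> u"])
          show "integrable ?M (\<lambda>u. exp (\<gamma> * c) * \<rho> u)" using rf(3) by simp
          show "(\<lambda>u. exp (\<gamma> * g u) * \<rho> u) \<in> borel_measurable ?M" by measurable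
          show "AE u in ?M. norm (exp (\<gamma> * g u) * \<rho> u) \<le> norm (exp (\<gamma> * c) * \<rho> u)"
          proof (intro AE_I2)
            fix u assume u: "u \<in> space ?M"
            then have "\<gamma> * g u \<le> \<gamma> * c" using c[of u] \<gamma>n by (simp add: mult_left_mono_neg)
            then have "exp (\<gamma> * g u) \<le> exp (\<gamma> * c)" by simp
            then show "norm (exp (\<gamma> * g u) * \<rho> u) \<le> norm (exp (\<gamma> * c) * \<rho> u)"
              using \<rho>nn[of u] u by (simp add: abs_mult mult_right_mono)
          qed
        qed
        then show False using False by simp
      qed
      have mm: "(\<lambda>u. exp (\<gamma> * g u) * \<rho> u) \<in> borel_measurable ?M" by measurable
      have "\<not> (\<integral>\<^sup>+ u. ennreal (norm (exp (\<gamma> * g u) * \<rho> u)) \<partial>?M) < \<infinity>"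
        using False integrableI_bounded[OF mm] by blast
      moreover have "(\<integral>\<^sup>+ u. ennreal (norm (exp (\<gamma> * g u) * \<rho> u)) \<partial>?M)
          = (\<integral>\<^sup>+ u. ennreal (exp (\<gamma> * g u) * \<rho> u) \<partial>?M)"
      proof (intro nn_integral_cong)
        fix u assume "u \<in> space ?M"
        then have "0 \<le> \<rho> u" using \<rho>nn by simp
        then show "ennreal (norm (exp (\<gamma> * g u) * \<rho> u)) = ennreal (exp (\<gamma> * g u) * \<rho> u)"
          by simp
      qed
      ultimately have Ainf: "(\<integral>\<^sup>+ u. ennreal (exp (\<gamma> * g u) * \<rho> u) \<partial>?M) = \<infinity>"
        by (simp add: less_top[symmetric])
      have Einf: "elog \<infinity> = \<infinity>" by (simp add: elog_def)
      have "F \<rho> = ereal (1 / \<gamma>) * \<infinity> - ereal (1 / (\<gamma> - \<beta>) * renyi_entropy U a \<rho>)"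
        by (simp only: F_def Ainf Einf)
      also have "\<dots> = \<infinity>" using \<gamma>p by simp
      finally have "F \<rho> = \<infinity>" .
      then show ?thesis by simp
    next
      case True
      define Ar where "Ar = (\<integral> u. exp (\<gamma> * g u) * \<rho> u \<partial>?M)"
      have AEnn: "AE u in ?M. 0 \<le> exp (\<gamma> * g u) * \<rho> u"
        by (intro AE_I2) (simp add: \<rho>nn)
      have Ap: "Ar > 0"
      proof -
        have A0: "Ar \<ge> 0" unfolding Ar_def using AEnn by (rule integral_nonneg_AE)
        have "Ar \<noteq> 0"
        proof
          assume "Ar = 0"
          then have "AE u in ?M. exp (\<gamma> * g u) * \<rho> u = 0"
            using integral_nonneg_eq_0_iff_AE[OF True AEnn] by (simp add: Ar_def)
          then have "AE u in ?M. \<rho> u = 0" by eventually_elim simp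
          then have "integral\<^sup>L ?M \<rho> = integral\<^sup>L ?M (\<lambda>u. 0)"
            by (intro integral_cong_AE) auto
          then show False using rf(4) by simp
        qed
        then show ?thesis using A0 by linarith
      qed
      have Aeq: "(\<integral>\<^sup>+ u. ennreal (exp (\<gamma> * g u) * \<rho> u) \<partial>?M) = ennreal Ar"
        unfolding Ar_def by (rule nn_integral_eq_integral[OF True AEnn])
      define R where "R = 1 / \<gamma> * ln Ar + \<delta> / (\<beta> * \<gamma>) * ln B"
      have E: "elog (ennreal Ar) = ereal (ln Ar)" using Ap by (simp add: elog_def)
      have "F \<rho> = ereal (1 / \<gamma>) * ereal (ln Ar) - ereal (- \<delta> / (\<beta> * \<gamma>) * ln B)"
        by (simp only: F_def Aeq E ren)
      also have "\<dots> = ereal R" by (simp add: R_def)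
      finally have FR: "F \<rho> = ereal R" .
      have nx1: "\<forall>u\<in>space ?M. 0 \<le> exp (\<beta> * g u)" by simp
      have nA: "\<forall>u\<in>space ?M. 0 \<le> exp (\<gamma> * g u) * \<rho> u" using \<rho>nn by simp
      have nB: "\<forall>u\<in>space ?M. 0 \<le> \<rho> u powr a" by simp
      have ZA: "0 < integral\<^sup>L ?M (\<lambda>u. exp (\<beta> * g u))" using Zp by (simp add: Z_def)
      have AA: "0 < integral\<^sup>L ?M (\<lambda>u. exp (\<gamma> * g u) * \<rho> u)" using Ap by (simp add: Ar_def)
      have BA: "0 < integral\<^sup>L ?M (\<lambda>u. \<rho> u powr a)" using Bp by (simp add: B_def)
      have \<gamma>\<beta>\<delta>: "\<gamma> = \<beta> + \<delta>" by (simp add: \<delta>_def)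
      have \<delta>nz: "\<delta> \<noteq> 0" using \<delta>p by simp
      consider (c1) "\<beta> > 0" | (c2) "\<beta> < 0" "\<gamma> > 0" | (c3) "\<gamma> < 0"
        using \<beta>_nz \<gamma>_nz \<beta>\<gamma> by linarith
      then have main: "1 / \<beta> * ln Z \<le> R \<and> (1 / \<beta> * ln Z = R \<longrightarrow> (\<exists>K. AE u in ?M. \<rho> u = K * exp (- \<delta> * g u)))"
      proof cases
        case c1
        define t where "t = \<beta> / \<gamma>"
        have \<gamma>p: "\<gamma> > 0" using c1 \<beta>\<gamma> by simp
        have t01: "0 < t" "t < 1" using c1 \<gamma>p \<beta>\<gamma> by (auto simp: t_def field_simps)
        have omt: "1 - t = \<delta> / \<gamma>" using \<gamma>p by (simp add: t_def \<delta>_def field_simps)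
        have "\<beta> / \<delta> > 0" using c1 \<delta>p by simp
        then have an: "a < 0" by (simp add: a\<delta>)
        have \<rho>pos: "AE u in ?M. \<rho> u > 0" using rf(8)[OF an] .
        have ex0: "t + a * (1 - t) = 0"
          unfolding omt using \<gamma>p \<delta>p by (simp add: t_def a\<delta> field_simps)
        have eq: "AE u in ?M. (exp (\<gamma> * g u) * \<rho> u) powr t * (\<rho> u powr a) powr (1 - t) = exp (\<beta> * g u)"
          using \<rho>pos
        proof eventually_elim
          fix u assume r: "\<rho> u > 0"
          have "(exp (\<gamma> * g u) * \<rho> u) powr t * (\<rho> u powr a) powr (1 - t)
              = exp (\<gamma> * g u * t) * \<rho> u powr (t + a * (1 - t))" using r by (rule pw1)
          also have "\<gamma> * g u * t = \<beta> * g u" using \<gamma>p by (simp add: t_def)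
          finally show "(exp (\<gamma> * g u) * \<rho> u) powr t * (\<rho> u powr a) powr (1 - t) = exp (\<beta> * g u)"
            using ex0 r by simp
        qed
        note H = holder_ln[OF t01 True rf(5) nA nB AA BA i1 eq ZA]
        have H1: "ln Z \<le> t * ln Ar + (1 - t) * ln B"
          using H(1) by (simp add: Z_def Ar_def B_def)
        show ?thesis
        proof (rule finish_lemma[where c="1 / \<beta>" and gap="t * ln Ar + (1 - t) * ln B - ln Z"])
          show "1 / \<beta> > 0" using c1 by simp
          show "R - 1 / \<beta> * ln Z = 1 / \<beta> * (t * ln Ar + (1 - t) * ln B - ln Z)"
            unfolding omt R_def using c1 \<gamma>p by (simp add: t_def field_simps)
          show "t * ln Ar + (1 - t) * ln B - ln Z \<ge> 0" using H1 by simp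
          assume "t * ln Ar + (1 - t) * ln B - ln Z = 0"
          then have "ln (integral\<^sup>L ?M (\<lambda>u. exp (\<beta> * g u))) =
              t * ln (integral\<^sup>L ?M (\<lambda>u. exp (\<gamma> * g u) * \<rho> u)) + (1 - t) * ln (integral\<^sup>L ?M (\<lambda>u. \<rho> u powr a))"
            by (simp add: Z_def Ar_def B_def)
          from H(2)[OF this] have "AE u in ?M. exp (\<gamma> * g u) * \<rho> u / Ar = \<rho> u powr a / B"
            by (simp add: Ar_def B_def)
          then have "AE u in ?M. \<rho> u = exp (\<delta> / \<gamma> * (ln Ar - ln B)) * exp (- \<delta> * g u)"
            using \<rho>pos
          proof eventually_elim
            fix u assume e: "exp (\<gamma> * g u) * \<rho> u / Ar = \<rho> u powr a / B" and r: "\<rho> u > 0"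
            have "ln (exp (\<gamma> * g u) * \<rho> u / Ar) = \<gamma> * g u + ln (\<rho> u) - ln Ar"
              using r Ap by (simp add: ln_div ln_mult)
            moreover have "ln (\<rho> u powr a / B) = a * ln (\<rho> u) - ln B"
              using r Bp by (simp add: ln_div ln_powr)
            ultimately have L1: "\<gamma> * g u + ln (\<rho> u) - ln Ar = a * ln (\<rho> u) - ln B" using e by simp
            have "(1 - a) * ln (\<rho> u) = ln (\<rho> u) - a * ln (\<rho> u)" by (simp add: algebra_simps)
            with L1 have L2: "(1 - a) * ln (\<rho> u) = ln Ar - ln B - \<gamma> * g u" by linarith
            have oma: "1 - a = \<gamma> / \<delta>" using \<delta>p by (simp add: a\<delta> \<gamma>\<beta>\<delta> field_simps)
            have "ln (\<rho> u) = \<delta> / \<gamma> * ((1 - a) * ln (\<rho> u))" using \<gamma>_nz \<delta>nz by (simp add: oma)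
            also have "\<dots> = \<delta> / \<gamma> * (ln Ar - ln B) - \<delta> * g u"
              unfolding L2 using \<gamma>_nz by (simp add: field_simps)
            finally show "\<rho> u = exp (\<delta> / \<gamma> * (ln Ar - ln B)) * exp (- \<delta> * g u)"
              using r by (intro expK)
          qed
          then show "\<exists>K. AE u in ?M. \<rho> u = K * exp (- \<delta> * g u)" by blast
        qed
      next
        case c2
        define t where "t = \<gamma> / \<delta>"
        have t01: "0 < t" "t < 1" using c2 \<delta>p by (auto simp: t_def \<gamma>\<beta>\<delta> field_simps)
        have omt: "1 - t = a" using \<delta>p by (simp add: t_def a\<delta> \<gamma>\<beta>\<delta> field_simps)
        have ex0: "\<beta> * t + \<gamma> * (1 - t) = 0"
          unfolding omt using \<delta>p by (simp add: t_def a\<delta> field_simps)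
        have eq: "AE u in ?M. (exp (\<beta> * g u)) powr t * (exp (\<gamma> * g u) * \<rho> u) powr (1 - t) = \<rho> u powr a"
        proof (intro AE_I2)
          fix u assume u: "u \<in> space ?M"
          then have r: "\<rho> u \<ge> 0" using \<rho>nn by simp
          have "(exp (\<beta> * g u)) powr t * (exp (\<gamma> * g u) * \<rho> u) powr (1 - t)
              = exp (\<beta> * g u * t + \<gamma> * g u * (1 - t)) * \<rho> u powr (1 - t)" using r by (rule pw2)
          also have "\<beta> * g u * t + \<gamma> * g u * (1 - t) = g u * (\<beta> * t + \<gamma> * (1 - t))"
            by (simp add: algebra_simps)
          finally show "(exp (\<beta> * g u)) powr t * (exp (\<gamma> * g u) * \<rho> u) powr (1 - t) = \<rho> u powr a"
            using ex0 omt by simp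
        qed
        note H = holder_ln[OF t01 i1 True nx1 nA ZA AA rf(5) eq BA]
        have H1: "ln B \<le> t * ln Z + (1 - t) * ln Ar"
          using H(1) by (simp add: Z_def Ar_def B_def)
        show ?thesis
        proof (rule finish_lemma[where c="- \<delta> / (\<beta> * \<gamma>)" and gap="t * ln Z + (1 - t) * ln Ar - ln B"])
          show "- \<delta> / (\<beta> * \<gamma>) > 0" using c2 \<delta>p by (simp add: divide_pos_neg mult_neg_pos)
          show "R - 1 / \<beta> * ln Z = - \<delta> / (\<beta> * \<gamma>) * (t * ln Z + (1 - t) * ln Ar - ln B)"
            unfolding omt R_def using c2 \<delta>p by (simp add: t_def a\<delta> field_simps)
          show "t * ln Z + (1 - t) * ln Ar - ln B \<ge> 0" using H1 by simp
          assume "t * ln Z + (1 - t) * ln Ar - ln B = 0"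
          then have "ln (integral\<^sup>L ?M (\<lambda>u. \<rho> u powr a)) =
              t * ln (integral\<^sup>L ?M (\<lambda>u. exp (\<beta> * g u))) + (1 - t) * ln (integral\<^sup>L ?M (\<lambda>u. exp (\<gamma> * g u) * \<rho> u))"
            by (simp add: Z_def Ar_def B_def)
          from H(2)[OF this] have "AE u in ?M. exp (\<beta> * g u) / Z = exp (\<gamma> * g u) * \<rho> u / Ar"
            by (simp add: Z_def Ar_def)
          then have "AE u in ?M. \<rho> u = Ar / Z * exp (- \<delta> * g u)"
          proof eventually_elim
            fix u assume e: "exp (\<beta> * g u) / Z = exp (\<gamma> * g u) * \<rho> u / Ar"
            have "\<rho> u = Ar / Z * (exp (\<beta> * g u) / exp (\<gamma> * g u))"
              using e Ap Zp by (simp add: field_simps)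
            also have "exp (\<beta> * g u) / exp (\<gamma> * g u) = exp (- \<delta> * g u)"
              by (simp add: exp_diff[symmetric] \<gamma>\<beta>\<delta> algebra_simps)
            finally show "\<rho> u = Ar / Z * exp (- \<delta> * g u)" .
          qed
          then show "\<exists>K. AE u in ?M. \<rho> u = K * exp (- \<delta> * g u)" by blast
        qed
      next
        case c3
        define t where "t = \<gamma> / \<beta>"
        have \<beta>n: "\<beta> < 0" using c3 \<beta>\<gamma> by simp
        have t01: "0 < t" "t < 1" using c3 \<beta>n \<beta>\<gamma> by (auto simp: t_def field_simps)
        have omt: "1 - t = - \<delta> / \<beta>" using \<beta>n by (simp add: t_def \<delta>_def field_simps)
        have ex1: "a * (1 - t) = 1"
          unfolding omt using \<delta>p \<beta>n by (simp add: a\<delta> field_simps)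
        have eq: "AE u in ?M. (exp (\<beta> * g u)) powr t * (\<rho> u powr a) powr (1 - t) = exp (\<gamma> * g u) * \<rho> u"
        proof (intro AE_I2)
          fix u assume u: "u \<in> space ?M"
          then have r: "\<rho> u \<ge> 0" using \<rho>nn by simp
          have "(exp (\<beta> * g u)) powr t * (\<rho> u powr a) powr (1 - t)
              = exp (\<beta> * g u * t) * \<rho> u powr (a * (1 - t))" using r by (rule pw3)
          also have "\<beta> * g u * t = \<gamma> * g u" using \<beta>_nz by (simp add: t_def)
          finally show "(exp (\<beta> * g u)) powr t * (\<rho> u powr a) powr (1 - t) = exp (\<gamma> * g u) * \<rho> u"
            using ex1 r by simp
        qed
        note H = holder_ln[OF t01 i1 rf(5) nx1 nB ZA BA True eq AA]
        have H1: "ln Ar \<le> t * ln Z + (1 - t) * ln B"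
          using H(1) by (simp add: Z_def Ar_def B_def)
        show ?thesis
        proof (rule finish_lemma[where c="- 1 / \<gamma>" and gap="t * ln Z + (1 - t) * ln B - ln Ar"])
          show "- 1 / \<gamma> > 0" using c3 by simp
          show "R - 1 / \<beta> * ln Z = - 1 / \<gamma> * (t * ln Z + (1 - t) * ln B - ln Ar)"
            unfolding omt R_def using c3 \<beta>n by (simp add: t_def field_simps)
          show "t * ln Z + (1 - t) * ln B - ln Ar \<ge> 0" using H1 by simp
          assume "t * ln Z + (1 - t) * ln B - ln Ar = 0"
          then have "ln (integral\<^sup>L ?M (\<lambda>u. exp (\<gamma> * g u) * \<rho> u)) =
              t * ln (integral\<^sup>L ?M (\<lambda>u. exp (\<beta> * g u))) + (1 - t) * ln (integral\<^sup>L ?M (\<lambda>u. \<rho> u powr a))"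
            by (simp add: Z_def Ar_def B_def)
          from H(2)[OF this] have "AE u in ?M. exp (\<beta> * g u) / Z = \<rho> u powr a / B"
            by (simp add: Z_def B_def)
          then have "AE u in ?M. \<rho> u = exp ((ln B - ln Z) / a) * exp (- \<delta> * g u)"
          proof (rule AE_mp, intro AE_I2 impI)
            fix u assume u: "u \<in> space ?M" and e: "exp (\<beta> * g u) / Z = \<rho> u powr a / B"
            have rnn: "\<rho> u \<ge> 0" using u \<rho>nn by simp
            have pa: "\<rho> u powr a = B * exp (\<beta> * g u) / Z" using e Bp Zp by (simp add: field_simps)
            then have "\<rho> u powr a > 0" using Bp Zp by simp
            then have r: "\<rho> u > 0" using rnn by (cases "\<rho> u = 0") auto
            have "a * ln (\<rho> u) = ln B + \<beta> * g u - ln Z"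
              using pa r Bp Zp by (simp add: ln_powr[symmetric] ln_div ln_mult)
            then have "ln (\<rho> u) = (ln B - ln Z) / a + \<beta> / a * g u" using a0 by (simp add: field_simps)
            also have "\<beta> / a = - \<delta>" using \<beta>_nz \<delta>p by (simp add: a\<delta> field_simps)
            finally have "ln (\<rho> u) = (ln B - ln Z) / a - \<delta> * g u" by simp
            then show "\<rho> u = exp ((ln B - ln Z) / a) * exp (- \<delta> * g u)"
              using r by (intro expK)
          qed
          then show "\<exists>K. AE u in ?M. \<rho> u = K * exp (- \<delta> * g u)" by blast
        qed
      qed
      have "ereal V \<le> F \<rho>" using main FR V_eq by simp
      moreover have "AE u in ?M. \<rho> u = \<rho>0 u" if "F \<rho> = ereal V"
      proof -
        have "1 / \<beta> * ln Z = R" using that FR V_eq by simp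
        then obtain K where "AE u in ?M. \<rho> u = K * exp (- \<delta> * g u)" using main by blast
        then show ?thesis by (rule uniq)
      qed
      ultimately show ?thesis by blast
    qed
  qed

  have \<gamma>\<delta>: "\<gamma> = \<beta> + \<delta>" by (simp add: \<delta>_def)
  have \<rho>0p: "\<rho>0 u > 0" for u using Wp by (simp add: \<rho>0_eq)
  have \<rho>0m[measurable]: "\<rho>0 \<in> borel_measurable ?M" unfolding \<rho>0_eq by measurable
  have i\<rho>0: "integrable ?M \<rho>0" unfolding \<rho>0_eq using i2' by simp
  have int\<rho>0: "integral\<^sup>L ?M \<rho>0 = 1"
  proof -
    have "integral\<^sup>L ?M \<rho>0 = W / W" unfolding \<rho>0_eq W_def by simp
    then show ?thesis using Wp by simp
  qed
  have \<rho>0a: "\<rho>0 u powr a = exp (\<beta> * g u) / W powr a" for u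
  proof -
    have "- \<delta> * g u * a = \<beta> * g u" using \<delta>p by (simp add: a\<delta> field_simps)
    then show ?thesis using Wp by (simp add: \<rho>0_eq powr_divide exp_powr_real)
  qed
  have i\<rho>0a: "integrable ?M (\<lambda>u. \<rho>0 u powr a)" unfolding \<rho>0a using i1 by simp
  have int\<rho>0a: "integral\<^sup>L ?M (\<lambda>u. \<rho>0 u powr a) = Z / W powr a"
    unfolding \<rho>0a by (simp add: Z_def)
  have \<rho>0L: "\<rho>0 \<in> L_alpha U a"
    unfolding L_alpha_def prob_density_on_def
  proof (intro CollectI conjI ballI)
    show "\<rho>0 \<in> borel_measurable ?M" by (rule \<rho>0m)
    show "0 \<le> \<rho>0 u" for u using \<rho>0p[of u] by simp
    have "(\<integral>\<^sup>+ u. ennreal (\<rho>0 u) \<partial>?M) = ennreal (integral\<^sup>L ?M \<rho>0)"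
      using \<rho>0p by (intro nn_integral_eq_integral[OF i\<rho>0] AE_I2) (simp add: less_imp_le)
    then show "(\<integral>\<^sup>+ u. ennreal (\<rho>0 u) \<partial>?M) = 1" using int\<rho>0 by simp
    have "(\<integral>\<^sup>+ u. epow a (\<rho>0 u) \<partial>?M) = (\<integral>\<^sup>+ u. ennreal (\<rho>0 u powr a) \<partial>?M)"
    proof (intro nn_integral_cong)
      fix u have "\<rho>0 u \<noteq> 0" using \<rho>0p[of u] by simp
      then show "epow a (\<rho>0 u) = ennreal (\<rho>0 u powr a)" by (simp add: epow_def)
    qed
    also have "\<dots> = ennreal (integral\<^sup>L ?M (\<lambda>u. \<rho>0 u powr a))"
      by (intro nn_integral_eq_integral[OF i\<rho>0a] AE_I2) simp
    finally show "(\<integral>\<^sup>+ u. epow a (\<rho>0 u) \<partial>?M) < \<infinity>" by simp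
  qed
  have F\<rho>0: "F \<rho>0 = ereal V"
  proof -
    note rf0 = rho_facts[OF \<rho>0L a0]
    have ren0: "1 / (\<gamma> - \<beta>) * renyi_entropy U a \<rho>0 = - \<delta> / (\<beta> * \<gamma>) * ln (Z / W powr a)"
      using rf0(7) Fren int\<rho>0a by simp
    have e0: "exp (\<gamma> * g u) * \<rho>0 u = exp (\<beta> * g u) / W" for u
    proof -
      have "exp (\<gamma> * g u) * exp (- \<delta> * g u) = exp (\<beta> * g u)"
        by (simp add: \<gamma>\<delta> flip: exp_add) (simp add: algebra_simps)
      then show ?thesis by (simp add: \<rho>0_eq)
    qed
    have "(\<integral>\<^sup>+ u. ennreal (exp (\<gamma> * g u) * \<rho>0 u) \<partial>?M) = (\<integral>\<^sup>+ u. ennreal (exp (\<beta> * g u) / W) \<partial>?M)"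
      unfolding e0 ..
    also have "\<dots> = ennreal (integral\<^sup>L ?M (\<lambda>u. exp (\<beta> * g u) / W))"
      using i1 Wp by (intro nn_integral_eq_integral AE_I2) auto
    also have "\<dots> = ennreal (Z / W)" by (simp add: Z_def)
    finally have A0: "(\<integral>\<^sup>+ u. ennreal (exp (\<gamma> * g u) * \<rho>0 u) \<partial>?M) = ennreal (Z / W)" .
    have E: "elog (ennreal (Z / W)) = ereal (ln (Z / W))" using Zp Wp by (simp add: elog_def)
    have "F \<rho>0 = ereal (1 / \<gamma>) * ereal (ln (Z / W)) - ereal (- \<delta> / (\<beta> * \<gamma>) * ln (Z / W powr a))"
      by (simp only: F_def A0 E ren0)
    also have "\<dots> = ereal (1 / \<gamma> * (ln Z - ln W) + \<delta> / (\<beta> * \<gamma>) * (ln Z - a * ln W))"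
      using Zp Wp by (simp add: ln_div ln_powr)
    also have "1 / \<gamma> * (ln Z - ln W) + \<delta> / (\<beta> * \<gamma>) * (ln Z - a * ln W) = 1 / \<beta> * ln Z"
    proof -
      have c1: "1 / \<gamma> + \<delta> / (\<beta> * \<gamma>) = 1 / \<beta>"
        using \<beta>_nz \<gamma>_nz by (simp add: field_simps \<delta>_def)
      have c2: "1 / \<gamma> + \<delta> * a / (\<beta> * \<gamma>) = 0"
        using \<delta>p \<beta>_nz \<gamma>_nz unfolding a\<delta> by (simp add: field_simps)
      have "1 / \<gamma> * (ln Z - ln W) + \<delta> / (\<beta> * \<gamma>) * (ln Z - a * ln W)
          = (1 / \<gamma> + \<delta> / (\<beta> * \<gamma>)) * ln Z - (1 / \<gamma> + \<delta> * a / (\<beta> * \<gamma>)) * ln W"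
        by (simp add: algebra_simps)
      then show ?thesis using c1 c2 by simp
    qed
    finally show ?thesis using V_eq by simp
  qed
  have "ereal V = (INF \<rho>\<in>L_alpha U a. F \<rho>)"
  proof (rule antisym)
    show "ereal V \<le> (INF \<rho>\<in>L_alpha U a. F \<rho>)"
    proof (rule INF_greatest)
      fix \<rho> assume "\<rho> \<in> L_alpha U a"
      from key[OF this] show "ereal V \<le> F \<rho>" by (rule conjunct1)
    qed
    show "(INF \<rho>\<in>L_alpha U a. F \<rho>) \<le> ereal V"
      using INF_lower[OF \<rho>0L, of F] F\<rho>0 by simp
  qed
  moreover have "\<forall>\<rho>\<in>L_alpha U a. F \<rho> = ereal V \<longrightarrow> (AE u in ?M. \<rho> u = \<rho>0 u)"
  proof (intro ballI impI)
    fix \<rho> assume "\<rho> \<in> L_alpha U a" "F \<rho> = ereal V"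
    then show "AE u in ?M. \<rho> u = \<rho>0 u" using key by blast
  qed
  ultimately show ?thesis using \<rho>0L F\<rho>0 by (intro conjI)
qed

lemma ereal_neg_aux:
  fixes E :: ereal and c r :: real
  shows "- (ereal c * E + ereal r) = ereal (- c) * E - ereal r"
  by (cases E) (auto simp: ereal_mult_minus_left)

lemma part2:
  fixes U :: "'a::euclidean_space set" and \<beta> \<gamma> :: real and h :: "'a \<Rightarrow> real"
  assumes U_meas: "U \<in> sets lebesgue" and U_pos: "emeasure lebesgue U > 0"
    and \<beta>_nz: "\<beta> \<noteq> 0" and \<gamma>_nz: "\<gamma> \<noteq> 0" and \<beta>\<gamma>: "\<beta> < \<gamma>"
    and hb: "\<exists>c. \<forall>u\<in>U. h u \<le> c"
    and j1: "integrable (lebesgue_on U) (\<lambda>u. exp (\<gamma> * h u))"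
    and j2: "integrable (lebesgue_on U) (\<lambda>u. exp ((\<gamma> - \<beta>) * h u))"
    and a_def: "a = \<gamma> / (\<gamma> - \<beta>)"
    and F_def: "F = (\<lambda>\<rho>. ereal (1 / \<beta>) *
                     elog (\<integral>\<^sup>+ u. ennreal (exp (\<beta> * h u) * \<rho> u) \<partial>lebesgue_on U)
                   + ereal (1 / (\<gamma> - \<beta>) * renyi_entropy U a \<rho>))"
    and V_def: "V = 1 / \<gamma> * ln (\<integral> u. exp (\<gamma> * h u) \<partial>lebesgue_on U)"
    and \<rho>0_def: "\<rho>0 = (\<lambda>u. exp ((\<gamma> - \<beta>) * h u) /
                    (\<integral> u'. exp ((\<gamma> - \<beta>) * h u') \<partial>lebesgue_on U))"
  shows "ereal V = (SUP \<rho>\<in>L_alpha U a. F \<rho>) \<and>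
         \<rho>0 \<in> L_alpha U a \<and> F \<rho>0 = ereal V \<and>
         (\<forall>\<rho>\<in>L_alpha U a. F \<rho> = ereal V \<longrightarrow> (AE u in lebesgue_on U. \<rho> u = \<rho>0 u))"
proof -
  have e1: "(\<lambda>u. exp (- (- \<beta> - - \<gamma>) * - h u)) = (\<lambda>u. exp ((\<gamma> - \<beta>) * h u))"
    by (simp add: algebra_simps)
  have e1': "\<And>u. exp (- (- \<beta> - - \<gamma>) * - h u) = exp ((\<gamma> - \<beta>) * h u)"
    by (simp add: algebra_simps)
  have R: "ereal (- V) = (INF \<rho>\<in>L_alpha U a. - F \<rho>) \<and>
         \<rho>0 \<in> L_alpha U a \<and> - F \<rho>0 = ereal (- V) \<and>
         (\<forall>\<rho>\<in>L_alpha U a. - F \<rho> = ereal (- V) \<longrightarrow> (AE u in lebesgue_on U. \<rho> u = \<rho>0 u))"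
  proof (rule part1[of U "- \<gamma>" "- \<beta>" "\<lambda>u. - h u" a "\<lambda>\<rho>. - F \<rho>" "- V" \<rho>0])
    show "U \<in> sets lebesgue" by (rule U_meas)
    show "emeasure lebesgue U > 0" by (rule U_pos)
    show "- \<gamma> \<noteq> 0" "- \<beta> \<noteq> 0" "- \<gamma> < - \<beta>" using \<beta>_nz \<gamma>_nz \<beta>\<gamma> by auto
    show "\<exists>c. \<forall>u\<in>U. c \<le> - h u"
    proof -
      obtain c where "\<forall>u\<in>U. h u \<le> c" using hb by blast
      then have "\<forall>u\<in>U. - c \<le> - h u" by simp
      then show ?thesis by blast
    qed
    show "integrable (lebesgue_on U) (\<lambda>u. exp (- \<gamma> * - h u))" using j1 by simp
    show "integrable (lebesgue_on U) (\<lambda>u. exp (- (- \<beta> - - \<gamma>) * - h u))" unfolding e1 by (rule j2)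
    show "a = 1 - - \<beta> / (- \<beta> - - \<gamma>)" using \<beta>\<gamma> by (simp add: a_def field_simps)
    show "(\<lambda>\<rho>. - F \<rho>) = (\<lambda>\<rho>. ereal (1 / - \<beta>) *
                     elog (\<integral>\<^sup>+ u. ennreal (exp (- \<beta> * - h u) * \<rho> u) \<partial>lebesgue_on U)
                   - ereal (1 / (- \<beta> - - \<gamma>) * renyi_entropy U a \<rho>))"
    proof (rule ext)
      fix \<rho> :: "'a \<Rightarrow> real"
      have "- F \<rho> = ereal (- (1 / \<beta>)) * elog (\<integral>\<^sup>+ u. ennreal (exp (\<beta> * h u) * \<rho> u) \<partial>lebesgue_on U)
                   - ereal (1 / (\<gamma> - \<beta>) * renyi_entropy U a \<rho>)"
        unfolding F_def by (rule ereal_neg_aux)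
      also have "\<dots> = ereal (1 / - \<beta>) *
                     elog (\<integral>\<^sup>+ u. ennreal (exp (- \<beta> * - h u) * \<rho> u) \<partial>lebesgue_on U)
                   - ereal (1 / (- \<beta> - - \<gamma>) * renyi_entropy U a \<rho>)"
        by simp
      finally show "- F \<rho> = ereal (1 / - \<beta>) *
                     elog (\<integral>\<^sup>+ u. ennreal (exp (- \<beta> * - h u) * \<rho> u) \<partial>lebesgue_on U)
                   - ereal (1 / (- \<beta> - - \<gamma>) * renyi_entropy U a \<rho>)" .
    qed
    show "- V = 1 / - \<gamma> * ln (\<integral> u. exp (- \<gamma> * - h u) \<partial>lebesgue_on U)" by (simp add: V_def)
    show "\<rho>0 = (\<lambda>u. exp (- (- \<beta> - - \<gamma>) * - h u) /
                    (\<integral> u'. exp (- (- \<beta> - - \<gamma>) * - h u') \<partial>lebesgue_on U))"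
      by (simp only: e1' \<rho>0_def)
  qed
  have S: "(SUP \<rho>\<in>L_alpha U a. F \<rho>) = - (INF \<rho>\<in>L_alpha U a. - F \<rho>)"
    using ereal_INF_uminus_eq[of F "L_alpha U a"] by simp
  show ?thesis
  proof (intro conjI)
    show "ereal V = (SUP \<rho>\<in>L_alpha U a. F \<rho>)" using R S by (metis ereal_uminus_uminus uminus_ereal.simps(1))
    show "\<rho>0 \<in> L_alpha U a" using R by blast
    show "F \<rho>0 = ereal V" using R by (metis ereal_uminus_uminus uminus_ereal.simps(1))
    show "\<forall>\<rho>\<in>L_alpha U a. F \<rho> = ereal V \<longrightarrow> (AE u in lebesgue_on U. \<rho> u = \<rho>0 u)"
    proof (intro ballI impI)
      fix \<rho> assume "\<rho> \<in> L_alpha U a" "F \<rho> = ereal V"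
      moreover have "- F \<rho> = ereal (- V)" using calculation(2) by simp
      ultimately show "AE u in lebesgue_on U. \<rho> u = \<rho>0 u" using R by blast
    qed
  qed
qed

theorem lemma2:
  fixes U :: "'a::euclidean_space set"
    and \<beta> \<gamma> :: real
    and g h :: "'a \<Rightarrow> real"
  assumes U_meas: "U \<in> sets lebesgue"
    and U_pos: "emeasure lebesgue U > 0"
    and \<beta>_nz: "\<beta> \<noteq> 0" and \<gamma>_nz: "\<gamma> \<noteq> 0"
    and \<beta>\<gamma>: "\<beta> < \<gamma>"
  shows
   "((\<exists>c. \<forall>u\<in>U. c \<le> g u) \<and>
     integrable (lebesgue_on U) (\<lambda>u. exp (\<beta> * g u)) \<and>
     integrable (lebesgue_on U) (\<lambda>u. exp (- (\<gamma> - \<beta>) * g u))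
     \<longrightarrow>
     (let a = 1 - \<gamma> / (\<gamma> - \<beta>);
          F = (\<lambda>\<rho>. ereal (1 / \<gamma>) *
                     elog (\<integral>\<^sup>+ u. ennreal (exp (\<gamma> * g u) * \<rho> u) \<partial>lebesgue_on U)
                   - ereal (1 / (\<gamma> - \<beta>) * renyi_entropy U a \<rho>));
          V = 1 / \<beta> * ln (\<integral> u. exp (\<beta> * g u) \<partial>lebesgue_on U);
          \<rho>0 = (\<lambda>u. exp (- (\<gamma> - \<beta>) * g u) /
                    (\<integral> u'. exp (- (\<gamma> - \<beta>) * g u') \<partial>lebesgue_on U))
      in ereal V = (INF \<rho>\<in>L_alpha U a. F \<rho>) \<and>
         \<rho>0 \<in> L_alpha U a \<and> F \<rho>0 = ereal V \<and>
         (\<forall>\<rho>\<in>L_alpha U a. F \<rho> = ereal V \<longrightarrow> (AE u in lebesgue_on U. \<rho> u = \<rho>0 u))))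
    \<and>
    ((\<exists>c. \<forall>u\<in>U. h u \<le> c) \<and>
     integrable (lebesgue_on U) (\<lambda>u. exp (\<gamma> * h u)) \<and>
     integrable (lebesgue_on U) (\<lambda>u. exp ((\<gamma> - \<beta>) * h u))
     \<longrightarrow>
     (let a = \<gamma> / (\<gamma> - \<beta>);
          F = (\<lambda>\<rho>. ereal (1 / \<beta>) *
                     elog (\<integral>\<^sup>+ u. ennreal (exp (\<beta> * h u) * \<rho> u) \<partial>lebesgue_on U)
                   + ereal (1 / (\<gamma> - \<beta>) * renyi_entropy U a \<rho>));
          V = 1 / \<gamma> * ln (\<integral> u. exp (\<gamma> * h u) \<partial>lebesgue_on U);
          \<rho>0 = (\<lambda>u. exp ((\<gamma> - \<beta>) * h u) /
                    (\<integral> u'. exp ((\<gamma> - \<beta>) * h u') \<partial>lebesgue_on U))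
      in ereal V = (SUP \<rho>\<in>L_alpha U a. F \<rho>) \<and>
         \<rho>0 \<in> L_alpha U a \<and> F \<rho>0 = ereal V \<and>
         (\<forall>\<rho>\<in>L_alpha U a. F \<rho> = ereal V \<longrightarrow> (AE u in lebesgue_on U. \<rho> u = \<rho>0 u))))"
  proof (rule conjI; rule impI)
  assume H: "(\<exists>c. \<forall>u\<in>U. c \<le> g u) \<and>
     integrable (lebesgue_on U) (\<lambda>u. exp (\<beta> * g u)) \<and>
     integrable (lebesgue_on U) (\<lambda>u. exp (- (\<gamma> - \<beta>) * g u))"
  then have h1: "\<exists>c. \<forall>u\<in>U. c \<le> g u"
    and h2: "integrable (lebesgue_on U) (\<lambda>u. exp (\<beta> * g u))"
    and h3: "integrable (lebesgue_on U) (\<lambda>u. exp (- (\<gamma> - \<beta>) * g u))" by blast+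
  show "let a = 1 - \<gamma> / (\<gamma> - \<beta>);
          F = (\<lambda>\<rho>. ereal (1 / \<gamma>) *
                     elog (\<integral>\<^sup>+ u. ennreal (exp (\<gamma> * g u) * \<rho> u) \<partial>lebesgue_on U)
                   - ereal (1 / (\<gamma> - \<beta>) * renyi_entropy U a \<rho>));
          V = 1 / \<beta> * ln (\<integral> u. exp (\<beta> * g u) \<partial>lebesgue_on U);
          \<rho>0 = (\<lambda>u. exp (- (\<gamma> - \<beta>) * g u) /
                    (\<integral> u'. exp (- (\<gamma> - \<beta>) * g u') \<partial>lebesgue_on U))
      in ereal V = (INF \<rho>\<in>L_alpha U a. F \<rho>) \<and>
         \<rho>0 \<in> L_alpha U a \<and> F \<rho>0 = ereal V \<and>
         (\<forall>\<rho>\<in>L_alpha U a. F \<rho> = ereal V \<longrightarrow> (AE u in lebesgue_on U. \<rho> u = \<rho>0 u))"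
    unfolding Let_def
    by (rule part1[OF U_meas U_pos \<beta>_nz \<gamma>_nz \<beta>\<gamma> h1 h2 h3 refl refl refl refl])
next
  assume H: "(\<exists>c. \<forall>u\<in>U. h u \<le> c) \<and>
     integrable (lebesgue_on U) (\<lambda>u. exp (\<gamma> * h u)) \<and>
     integrable (lebesgue_on U) (\<lambda>u. exp ((\<gamma> - \<beta>) * h u))"
  then have h1: "\<exists>c. \<forall>u\<in>U. h u \<le> c"
    and h2: "integrable (lebesgue_on U) (\<lambda>u. exp (\<gamma> * h u))"
    and h3: "integrable (lebesgue_on U) (\<lambda>u. exp ((\<gamma> - \<beta>) * h u))" by blast+
  show "let a = \<gamma> / (\<gamma> - \<beta>);
          F = (\<lambda>\<rho>. ereal (1 / \<beta>) *
                     elog (\<integral>\<^sup>+ u. ennreal (exp (\<beta> * h u) * \<rho> u) \<partial>lebesgue_on U)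
                   + ereal (1 / (\<gamma> - \<beta>) * renyi_entropy U a \<rho>));
          V = 1 / \<gamma> * ln (\<integral> u. exp (\<gamma> * h u) \<partial>lebesgue_on U);
          \<rho>0 = (\<lambda>u. exp ((\<gamma> - \<beta>) * h u) /
                    (\<integral> u'. exp ((\<gamma> - \<beta>) * h u') \<partial>lebesgue_on U))
      in ereal V = (SUP \<rho>\<in>L_alpha U a. F \<rho>) \<and>
         \<rho>0 \<in> L_alpha U a \<and> F \<rho>0 = ereal V \<and>
         (\<forall>\<rho>\<in>L_alpha U a. F \<rho> = ereal V \<longrightarrow> (AE u in lebesgue_on U. \<rho> u = \<rho>0 u))"
    unfolding Let_def
    by (rule part2[OF U_meas U_pos \<beta>_nz \<gamma>_nz \<beta>\<gamma> h1 h2 h3 refl refl refl refl])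
qed

end
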